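(* For every positive integer $k$, there exist a binary matrix $A_k$ and binary column vectors $x_1,\dots,x_k$ such that $R_{binary}(A_k|x_i)=R_{binary}(A_k)=4$ for all $1\le i\le k$, but $R_{binary}(A_k|x_1,\dots,x_k)=k+3$.
   Context: For a binary $n\times m$ matrix $A$, $R_{binary}(A)$ is the least $k$ such that $A=UV$ with $U\in\{0,1\}^{n\times k}$, $V\in\{0,1\}^{k\times m}$, ordinary arithmetic. $(A|x_1,\dots,x_t)$ denotes $A$ with the columns $x_1,\dots,x_t$ appended on the right. *)

theory Defs
  imports Main
begin

text \<open>An n x m matrix is represented as a function A :: nat => nat => nat,
  entry (i,j) = A i j, only meaningful for i < n, j < m.\<close>

definition binary_matrix :: "nat \<Rightarrow> nat \<Rightarrow> (nat \<Rightarrow> nat \<Rightarrow> nat) \<Rightarrow> bool" where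
  "binary_matrix n m A \<longleftrightarrow> (\<forall>i<n. \<forall>j<m. A i j \<in> {0, 1})"

definition has_binary_factorization ::
  "nat \<Rightarrow> nat \<Rightarrow> nat \<Rightarrow> (nat \<Rightarrow> nat \<Rightarrow> nat) \<Rightarrow> bool" where
  "has_binary_factorization n m k A \<longleftrightarrow>
     (\<exists>U V. binary_matrix n k U \<and> binary_matrix k m V \<and>
        (\<forall>i<n. \<forall>j<m. A i j = (\<Sum>l<k. U i l * V l j)))"

definition binary_rank :: "nat \<Rightarrow> nat \<Rightarrow> (nat \<Rightarrow> nat \<Rightarrow> nat) \<Rightarrow> nat" where
  "binary_rank n m A = (LEAST k. has_binary_factorization n m k A)"

text \<open>(A | x_0, ..., x_{t-1}): the n x m matrix A with t columns appended;
  X l i is the i-th entry of the l-th appended column.\<close>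
definition append_cols ::
  "nat \<Rightarrow> (nat \<Rightarrow> nat \<Rightarrow> nat) \<Rightarrow> (nat \<Rightarrow> nat \<Rightarrow> nat) \<Rightarrow> nat \<Rightarrow> nat \<Rightarrow> nat" where
  "append_cols m A X = (\<lambda>i j. if j < m then A i j else X (j - m) i)"

end

theory Submission
  imports Defs
begin

lemma fool:
  assumes h: "has_binary_factorization n m K M"
    and e: "\<forall>t<N. fi t < n \<and> fj t < m \<and> M (fi t) (fj t) \<noteq> 0"
    and f: "\<forall>t<N. \<forall>t'<N. t \<noteq> t' \<longrightarrow> M (fi t) (fj t') = 0 \<or> M (fi t') (fj t) = 0"
  shows "N \<le> K"
proof -
  obtain U V where bU: "binary_matrix n K U" and bV: "binary_matrix K m V"
    and eq: "\<forall>i<n. \<forall>j<m. M i j = (\<Sum>l<K. U i l * V l j)"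
    using h unfolding has_binary_factorization_def by blast
  have ex: "\<exists>l<K. U (fi t) l \<noteq> 0 \<and> V l (fj t) \<noteq> 0" if "t < N" for t
  proof (rule ccontr)
    assume nx: "\<not> (\<exists>l<K. U (fi t) l \<noteq> 0 \<and> V l (fj t) \<noteq> 0)"
    have a: "fi t < n" "fj t < m" "M (fi t) (fj t) \<noteq> 0" using e that by auto
    have "M (fi t) (fj t) = (\<Sum>l<K. U (fi t) l * V l (fj t))" using eq a(1,2) by blast
    also have "\<dots> = 0"
    proof (rule sum.neutral)
      show "\<forall>l\<in>{..<K}. U (fi t) l * V l (fj t) = 0" using nx by auto
    qed
    finally show False using a(3) by blast
  qed
  define g where "g t = (SOME l. l < K \<and> U (fi t) l \<noteq> 0 \<and> V l (fj t) \<noteq> 0)" for t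
  have g: "g t < K \<and> U (fi t) (g t) \<noteq> 0 \<and> V (g t) (fj t) \<noteq> 0" if "t < N" for t
    unfolding g_def using someI_ex[OF ex[OF that]] by blast
  have pos: "M i j \<noteq> 0" if "i < n" "j < m" "l < K" "U i l \<noteq> 0" "V l j \<noteq> 0" for i j l
  proof -
    have "U i l * V l j \<le> (\<Sum>l<K. U i l * V l j)"
      by (rule member_le_sum) (use that in auto)
    moreover have "U i l * V l j \<noteq> 0" using that by simp
    moreover have "M i j = (\<Sum>l<K. U i l * V l j)" using eq that by blast
    ultimately show ?thesis by linarith
  qed
  have "inj_on g {..<N}"
  proof (rule inj_onI, rule ccontr)
    fix t t' assume t: "t \<in> {..<N}" "t' \<in> {..<N}" "g t = g t'" "t \<noteq> t'"
    have tN: "t < N" "t' < N" using t by auto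
    have "M (fi t) (fj t') \<noteq> 0"
      by (rule pos[of _ _ "g t"]) (use g[OF tN(1)] g[OF tN(2)] e tN t(3) in auto)
    moreover have "M (fi t') (fj t) \<noteq> 0"
      by (rule pos[of _ _ "g t"]) (use g[OF tN(1)] g[OF tN(2)] e tN t(3) in auto)
    moreover have "M (fi t) (fj t') = 0 \<or> M (fi t') (fj t) = 0" using f[rule_format, OF tN(1) tN(2) t(4)] .
    ultimately show False by simp
  qed
  moreover have "g ` {..<N} \<subseteq> {..<K}" using g by auto
  ultimately have "card {..<N} \<le> card {..<K}" by (intro card_inj_on_le) auto
  then show ?thesis by simp
qed

lemma hbf_intro:
  assumes "\<forall>i<n. \<forall>j<m. M i j \<in> {0,1} \<and> (M i j = 1 \<longleftrightarrow> (\<exists>l<K. R l i \<and> C l j))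
     \<and> (\<forall>l<K. \<forall>l'<K. R l i \<and> C l j \<and> R l' i \<and> C l' j \<longrightarrow> l = l')"
  shows "has_binary_factorization n m K M"
  unfolding has_binary_factorization_def
proof (intro exI conjI)
  show "binary_matrix n K (\<lambda>i l. if R l i then 1 else 0)" unfolding binary_matrix_def by auto
  show "binary_matrix K m (\<lambda>l j. if C l j then 1 else 0)" unfolding binary_matrix_def by auto
  show "\<forall>i<n. \<forall>j<m. M i j = (\<Sum>l<K. (if R l i then 1 else 0) * (if C l j then 1 else 0))"
  proof (intro allI impI)
    fix i j assume ij: "i < n" "j < m"
    have A: "M i j \<in> {0,1}" "M i j = 1 \<longleftrightarrow> (\<exists>l<K. R l i \<and> C l j)"
      "\<forall>l<K. \<forall>l'<K. R l i \<and> C l j \<and> R l' i \<and> C l' j \<longrightarrow> l = l'"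
      using assms ij by blast+
    show "M i j = (\<Sum>l<K. (if R l i then 1 else 0) * (if C l j then 1 else 0))"
    proof (cases "\<exists>l<K. R l i \<and> C l j")
      case True
      then obtain l0 where l0: "l0 < K" "R l0 i" "C l0 j" by blast
      have "(\<Sum>l<K. (if R l i then 1 else 0) * (if C l j then 1 else (0::nat)))
          = (\<Sum>l<K. if l = l0 then 1 else 0)"
      proof (rule sum.cong)
        fix l assume "l \<in> {..<K}"
        then have "l < K" by simp
        then show "(if R l i then 1 else 0) * (if C l j then 1 else (0::nat)) = (if l = l0 then 1 else 0)"
          using A(3) l0 by auto
      qed simp
      also have "\<dots> = 1" using l0(1) by simp
      finally show ?thesis using A(2) True by simp
    next
      case False
      have "(\<Sum>l<K. (if R l i then 1 else 0) * (if C l j then 1 else (0::nat))) = 0"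
        by (rule sum.neutral) (use False in auto)
      moreover have "M i j = 0" using A(1) A(2) False by auto
      ultimately show ?thesis by simp
    qed
  qed
qed

lemma rank_eq:
  assumes "has_binary_factorization n m r M"
    and "\<And>K. has_binary_factorization n m K M \<Longrightarrow> r \<le> K"
  shows "binary_rank n m M = r"
  unfolding binary_rank_def using assms by (intro Least_equality) auto

definition AA :: "nat \<Rightarrow> nat \<Rightarrow> nat" where
  "AA i j = (if 4 \<le> i then 1 else if (i,j) \<in> {(0,0),(0,1),(1,2),(1,3),(2,0),(2,2),(3,1),(3,3)} then 1 else 0)"

definition XX :: "nat \<Rightarrow> nat \<Rightarrow> nat" where
  "XX l i = (if i = 0 \<or> i = 4 + l then 1 else 0)"

lemma all4: "(\<forall>l<(4::nat). Q l) \<longleftrightarrow> Q 0 \<and> Q 1 \<and> Q 2 \<and> Q 3"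
  by (auto simp: eval_nat_numeral less_Suc_eq)

lemma ex4: "(\<exists>l<(4::nat). Q l) \<longleftrightarrow> Q 0 \<or> Q 1 \<or> Q 2 \<or> Q 3"
  by (auto simp: eval_nat_numeral less_Suc_eq)

lemma hbf_A: "has_binary_factorization (k+4) 4 4 AA"
  apply (rule hbf_intro[where R="\<lambda>l i. (l=0 \<and> (i=0 \<or> 4\<le>i)) \<or> (l=1 \<and> (i=1 \<or> 4\<le>i)) \<or> (l=2 \<and> i=2) \<or> (l=3 \<and> i=3)"
     and C="\<lambda>l j. (l=0 \<and> j\<le>1) \<or> (l=1 \<and> (j=2\<or>j=3)) \<or> (l=2 \<and> (j=0\<or>j=2)) \<or> (l=3 \<and> (j=1\<or>j=3))"])
  apply (intro allI impI)
  subgoal for i j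
    apply (subgoal_tac "(j=0 \<or> j=1 \<or> j=2 \<or> j=3) \<and> (i=0 \<or> i=1 \<or> i=2 \<or> i=3 \<or> 4\<le>i)")
     apply (elim conjE disjE; simp add: AA_def all4 ex4)
    by auto
  done

lemma hbf_Ax: "has_binary_factorization (k+4) (4+1) 4 (append_cols 4 AA (\<lambda>_. XX q))"
  apply (rule hbf_intro[where R="\<lambda>l i. (l=0 \<and> (i=0 \<or> i=4+q)) \<or> (l=1 \<and> (i=1 \<or> i=4+q)) \<or> (l=2 \<and> (i=2 \<or> (4\<le>i \<and> i\<noteq>4+q))) \<or> (l=3 \<and> (i=3 \<or> (4\<le>i \<and> i\<noteq>4+q)))"
     and C="\<lambda>l j. (l=0 \<and> (j\<le>1 \<or> j=4)) \<or> (l=1 \<and> (j=2\<or>j=3)) \<or> (l=2 \<and> (j=0\<or>j=2)) \<or> (l=3 \<and> (j=1\<or>j=3))"])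
  apply (intro allI impI)
  subgoal for i j
    apply (subgoal_tac "(j=0 \<or> j=1 \<or> j=2 \<or> j=3 \<or> j=4) \<and> (i=0 \<or> i=1 \<or> i=2 \<or> i=3 \<or> i=4+q \<or> (4\<le>i \<and> i\<noteq>4+q))")
     apply (elim conjE disjE; simp add: append_cols_def AA_def XX_def all4 ex4)
    by auto
  done

lemma allK:
  assumes "4 \<le> K"
  shows "(\<forall>l<(K::nat). Q l) \<longleftrightarrow> Q 0 \<and> Q 1 \<and> Q 2 \<and> Q 3 \<and> (\<forall>l. 4 \<le> l \<and> l < K \<longrightarrow> Q l)"
proof
  assume "\<forall>l<K. Q l" then show "Q 0 \<and> Q 1 \<and> Q 2 \<and> Q 3 \<and> (\<forall>l. 4 \<le> l \<and> l < K \<longrightarrow> Q l)"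
    using assms by auto
next
  assume H: "Q 0 \<and> Q 1 \<and> Q 2 \<and> Q 3 \<and> (\<forall>l. 4 \<le> l \<and> l < K \<longrightarrow> Q l)"
  show "\<forall>l<K. Q l"
  proof (intro allI impI)
    fix l assume "l < K"
    have "l = 0 \<or> l = 1 \<or> l = 2 \<or> l = 3 \<or> 4 \<le> l" by auto
    then show "Q l" using H \<open>l < K\<close> by auto
  qed
qed

lemma exK: "4 \<le> K \<Longrightarrow> (\<exists>l<(K::nat). Q l) \<longleftrightarrow> Q 0 \<or> Q 1 \<or> Q 2 \<or> Q 3 \<or> (\<exists>l. 4 \<le> l \<and> l < K \<and> Q l)"
  using allK[of K "\<lambda>l. \<not> Q l"] by auto

lemma hbf_full: "1 \<le> k \<Longrightarrow> has_binary_factorization (k+4) (4+k) (k+3) (append_cols 4 AA XX)"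
  apply (rule hbf_intro[where R="\<lambda>l i. (l=0 \<and> (i=0 \<or> i=4)) \<or> (l=1 \<and> (i=1 \<or> i=4)) \<or> (l=2 \<and> (i=2 \<or> 5\<le>i)) \<or> (l=3 \<and> (i=3 \<or> 5\<le>i)) \<or> (4\<le>l \<and> (i=0 \<or> i=l+1))"
     and C="\<lambda>l j. (l=0 \<and> (j\<le>1 \<or> j=4)) \<or> (l=1 \<and> (j=2\<or>j=3)) \<or> (l=2 \<and> (j=0\<or>j=2)) \<or> (l=3 \<and> (j=1\<or>j=3)) \<or> (4\<le>l \<and> l = j - 1 \<and> 5 \<le> j)"])
  apply (intro allI impI)
  subgoal for i j
    apply (subgoal_tac "(j=0 \<or> j=1 \<or> j=2 \<or> j=3 \<or> j=4 \<or> 5 \<le> j) \<and> (i=0 \<or> i=1 \<or> i=2 \<or> i=3 \<or> i=4 \<or> 5\<le>i)")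
     apply (elim conjE disjE; simp add: append_cols_def AA_def XX_def allK[of "k+3"] exK[of "k+3"])
    by auto
  done

lemma lb_A:
  assumes "has_binary_factorization (k+4) 4 K AA" shows "4 \<le> K"
  apply (rule fool[OF assms, where fi="\<lambda>t. t" and fj="\<lambda>t. if t=0 then 1 else if t=1 then 2 else if t=2 then 0 else 3"])
   apply (simp_all add: all4 AA_def)
  done

lemma lb_Ax:
  assumes "has_binary_factorization (k+4) (4+1) K (append_cols 4 AA (\<lambda>_. XX q))" shows "4 \<le> K"
  apply (rule fool[OF assms, where fi="\<lambda>t. t" and fj="\<lambda>t. if t=0 then 1 else if t=1 then 2 else if t=2 then 0 else 3"])
   apply (simp_all add: all4 AA_def append_cols_def)
  done

lemma lb_full:
  assumes "1 \<le> k" "has_binary_factorization (k+4) (4+k) K (append_cols 4 AA XX)" shows "k+3 \<le> K"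
  apply (rule fool[OF assms(2), where fi="\<lambda>t. if t=0 then 1 else if t=1 then 2 else if t=2 then 3 else t+1"
    and fj="\<lambda>t. if t=0 then 2 else if t=1 then 0 else if t=2 then 3 else t+1"])
  using assms(1) by (simp_all add: allK[of "k+3"] AA_def XX_def append_cols_def)

theorem theorem5:
  fixes k :: nat
  assumes "k \<ge> 1"
  shows "\<exists>(n::nat) (m::nat) (A::nat \<Rightarrow> nat \<Rightarrow> nat) (X::nat \<Rightarrow> nat \<Rightarrow> nat).
           binary_matrix n m A \<and>
           (\<forall>l<k. \<forall>i<n. X l i \<in> {0, 1}) \<and>
           binary_rank n m A = 4 \<and>
           (\<forall>l<k. binary_rank n (m + 1) (append_cols m A (\<lambda>_. X l)) = 4) \<and>
           binary_rank n (m + k) (append_cols m A X) = k + 3"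
proof (intro exI conjI)
  show "binary_matrix (k+4) 4 AA" unfolding binary_matrix_def AA_def by auto
  show "\<forall>l<k. \<forall>i<k+4. XX l i \<in> {0, 1}" unfolding XX_def by auto
  show "binary_rank (k+4) 4 AA = 4" by (rule rank_eq[OF hbf_A lb_A])
  show "\<forall>l<k. binary_rank (k+4) (4 + 1) (append_cols 4 AA (\<lambda>_. XX l)) = 4"
  proof (intro allI impI)
    fix l assume "l < k"
    show "binary_rank (k+4) (4 + 1) (append_cols 4 AA (\<lambda>_. XX l)) = 4"
      by (rule rank_eq[OF hbf_Ax lb_Ax])
  qed
  show "binary_rank (k+4) (4 + k) (append_cols 4 AA XX) = k + 3"
    by (rule rank_eq[OF hbf_full[OF assms] lb_full[OF assms]])
qed

end
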